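(* Let $K\subseteq\mathbb{R}^m$ be closed, $G:\mathbb{R}^n\to\mathbb{R}^m$ locally Lipschitz continuous and second-order directionally differentiable at $x^*$, $\Psi=\{x:G(x)\in K\}$, $x^*\in\Psi$. If MSCQ for $\Psi$ holds at $x^*$, then for any $d\in\mathbb{R}^n$, $$\mathcal{T}^2_\Psi(x^*;d)=\{w\in\mathbb{R}^n: G''(x^*;d,w)\in\mathcal{T}^2_K(G(x^* );G'(x^*;d))\}.$$
   Context: $G'(x;d)=\lim_{t\downarrow0}(G(x+td)-G(x))/t$; $G''(x;d,w)=\lim_{t\downarrow0}\frac{G(x+td+\frac12t^2w)-G(x)-tG'(x;d)}{\frac12t^2}$; second-order directionally differentiable at $x$ means these limits exist for all $d,w$. Outer second-order tangent set of $C$ at $x$ in direction $d$: $\mathcal{T}^2_C(x;d)=\{w:\exists t_k\downarrow0,w^k\to w,x+t_kd+\frac12t_k^2w^k\in C\}$. MSCQ for $\Psi$ at $x^*$: there exist a neighborhood $U$ of $x^*$ and $\kappa>0$ with $\mathrm{dist}(x,\Psi)\le\kappa\,\mathrm{dist}(G(x),K)$ for all $x\in U$. *)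

theory Defs
  imports "HOL-Analysis.Analysis"
begin

definition loc_lipschitz :: "('a::metric_space \<Rightarrow> 'b::metric_space) \<Rightarrow> bool" where
  "loc_lipschitz G \<longleftrightarrow> (\<forall>x. \<exists>U L. open U \<and> x \<in> U \<and> L-lipschitz_on U G)"

definition dir_deriv :: "('a::real_normed_vector \<Rightarrow> 'b::real_normed_vector) \<Rightarrow> 'a \<Rightarrow> 'a \<Rightarrow> 'b" where
  "dir_deriv G x d = Lim (at_right (0::real)) (\<lambda>t. (G (x + t *\<^sub>R d) - G x) /\<^sub>R t)"

definition dir_deriv2 :: "('a::real_normed_vector \<Rightarrow> 'b::real_normed_vector) \<Rightarrow> 'a \<Rightarrow> 'a \<Rightarrow> 'a \<Rightarrow> 'b" where
  "dir_deriv2 G x d w = Lim (at_right (0::real))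
     (\<lambda>t. (G (x + t *\<^sub>R d + ((1/2) * t\<^sup>2) *\<^sub>R w) - G x - t *\<^sub>R dir_deriv G x d) /\<^sub>R ((1/2) * t\<^sup>2))"

definition sodd_at :: "('a::real_normed_vector \<Rightarrow> 'b::real_normed_vector) \<Rightarrow> 'a \<Rightarrow> bool" where
  "sodd_at G x \<longleftrightarrow>
     (\<forall>d. \<exists>v. ((\<lambda>t. (G (x + t *\<^sub>R d) - G x) /\<^sub>R t) \<longlongrightarrow> v) (at_right 0)) \<and>
     (\<forall>d w. \<exists>v. ((\<lambda>t. (G (x + t *\<^sub>R d + ((1/2) * t\<^sup>2) *\<^sub>R w) - G x - t *\<^sub>R dir_deriv G x d)
                      /\<^sub>R ((1/2) * t\<^sup>2)) \<longlongrightarrow> v) (at_right 0))"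

definition outer_tangent2 :: "'a::real_normed_vector set \<Rightarrow> 'a \<Rightarrow> 'a \<Rightarrow> 'a set" where
  "outer_tangent2 C x d = {w. \<exists>t wk. (\<forall>k. t k > 0) \<and> t \<longlonglongrightarrow> 0 \<and> wk \<longlonglongrightarrow> w \<and>
      (\<forall>k. x + t k *\<^sub>R d + ((1/2) * (t k)\<^sup>2) *\<^sub>R wk k \<in> C)}"

definition MSCQ :: "('a::real_normed_vector \<Rightarrow> 'b::real_normed_vector) \<Rightarrow> 'b set \<Rightarrow> 'a \<Rightarrow> bool" where
  "MSCQ G K xs \<longleftrightarrow> (\<exists>U \<kappa>. open U \<and> xs \<in> U \<and> \<kappa> > 0 \<and>
      (\<forall>x\<in>U. infdist x {y. G y \<in> K} \<le> \<kappa> * infdist (G x) K))"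

end

theory Submission
  imports Defs
begin

lemma infdist_approx:
  fixes x :: "'a::metric_space"
  assumes "a0 \<in> A" "e > 0"
  shows "\<exists>a\<in>A. dist x a < infdist x A + e"
proof -
  have ne: "A \<noteq> {}" using assms by auto
  have bdd: "bdd_below ((\<lambda>a. dist x a) ` A)" by (rule bdd_belowI[of _ 0]) auto
  have "(INF a\<in>A. dist x a) < infdist x A + e" using infdist_notempty[OF ne] assms by simp
  then show ?thesis using cINF_less_iff[OF ne bdd] by blast
qed

lemma norm_scaleR_inv_pos: "(s::real) > 0 \<Longrightarrow> norm ((x::'a::real_normed_vector) /\<^sub>R s) = norm x / s"
  by (simp add: divide_inverse mult.commute)

lemma key_limit:
  fixes G :: "'a::real_normed_vector \<Rightarrow> 'b::real_normed_vector"
  assumes lip: "loc_lipschitz G" and sod: "sodd_at G xs"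
    and tpos: "\<forall>k. t k > 0" and t0: "t \<longlonglongrightarrow> 0" and wl: "wk \<longlonglongrightarrow> w"
  shows "(\<lambda>k. (G (xs + t k *\<^sub>R d + ((1/2) * (t k)\<^sup>2) *\<^sub>R wk k) - G xs - t k *\<^sub>R dir_deriv G xs d)
            /\<^sub>R ((1/2) * (t k)\<^sup>2)) \<longlonglongrightarrow> dir_deriv2 G xs d w"
proof -
  define v where "v = dir_deriv G xs d"
  define F where "F = (\<lambda>s::real. (G (xs + s *\<^sub>R d + ((1/2) * s\<^sup>2) *\<^sub>R w) - G xs - s *\<^sub>R v) /\<^sub>R ((1/2) * s\<^sup>2))"
  obtain c where c: "(F \<longlongrightarrow> c) (at_right 0)" using sod unfolding sodd_at_def F_def v_def by blast
  have "dir_deriv2 G xs d w = c"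
    unfolding dir_deriv2_def using tendsto_Lim[OF trivial_limit_at_right_real c]
    unfolding F_def v_def by simp
  hence Fl: "(F \<longlongrightarrow> dir_deriv2 G xs d w) (at_right 0)" using c by simp
  have tf: "filterlim t (at_right 0) sequentially"
    unfolding filterlim_at using tpos t0 by (auto intro!: always_eventually simp: less_imp_neq[symmetric])
  have FT: "(\<lambda>k. F (t k)) \<longlonglongrightarrow> dir_deriv2 G xs d w"
    using filterlim_compose[OF Fl tf] .
  obtain U L where U: "open U" "xs \<in> U" "L-lipschitz_on U G" using lip unfolding loc_lipschitz_def by blast
  define a where "a = (\<lambda>k. xs + t k *\<^sub>R d + ((1/2) * (t k)\<^sup>2) *\<^sub>R wk k)"
  define b where "b = (\<lambda>k. xs + t k *\<^sub>R d + ((1/2) * (t k)\<^sup>2) *\<^sub>R w)"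
  have "a \<longlonglongrightarrow> xs + 0 *\<^sub>R d + ((1/2) * 0\<^sup>2) *\<^sub>R w" unfolding a_def
    by (intro tendsto_intros t0 wl)
  hence al: "a \<longlonglongrightarrow> xs" by simp
  have "b \<longlonglongrightarrow> xs + 0 *\<^sub>R d + ((1/2) * 0\<^sup>2) *\<^sub>R w" unfolding b_def
    by (intro tendsto_intros t0)
  hence bl: "b \<longlonglongrightarrow> xs" by simp
  have ev: "eventually (\<lambda>k. a k \<in> U \<and> b k \<in> U) sequentially"
    using topological_tendstoD[OF al U(1,2)] topological_tendstoD[OF bl U(1,2)]
    by (simp add: eventually_conj)
  define D where "D = (\<lambda>k. (G (a k) - G xs - t k *\<^sub>R v) /\<^sub>R ((1/2) * (t k)\<^sup>2) - F (t k))"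
  have Dk: "D k = (G (a k) - G (b k)) /\<^sub>R ((1/2) * (t k)\<^sup>2)" for k
    unfolding D_def F_def b_def by (simp add: algebra_simps)
  have "eventually (\<lambda>k. norm (D k) \<le> L * norm (wk k - w)) sequentially"
    using ev
  proof (rule eventually_mono)
    fix k assume k: "a k \<in> U \<and> b k \<in> U"
    have tp: "(1/2) * (t k)\<^sup>2 > 0" using tpos[rule_format, of k] by simp
    have "norm (G (a k) - G (b k)) \<le> L * norm (a k - b k)"
      using lipschitz_onD[OF U(3)] k by (simp add: dist_norm)
    also have "a k - b k = ((1/2) * (t k)\<^sup>2) *\<^sub>R (wk k - w)"
      unfolding a_def b_def by (simp add: algebra_simps)
    finally have "norm (G (a k) - G (b k)) \<le> L * ((1/2) * (t k)\<^sup>2 * norm (wk k - w))"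
      using tp by simp
    moreover have "norm (D k) = norm (G (a k) - G (b k)) / ((1/2) * (t k)\<^sup>2)"
      unfolding Dk using tp by (rule norm_scaleR_inv_pos)
    moreover have "norm (G (a k) - G (b k)) / ((1/2) * (t k)\<^sup>2) \<le>
        (L * ((1/2) * (t k)\<^sup>2 * norm (wk k - w))) / ((1/2) * (t k)\<^sup>2)"
      by (rule divide_right_mono) (use tp calculation in auto)
    moreover have "(L * ((1/2) * (t k)\<^sup>2 * norm (wk k - w))) / ((1/2) * (t k)\<^sup>2) = L * norm (wk k - w)"
      using tp by simp
    ultimately show "norm (D k) \<le> L * norm (wk k - w)"
      by linarith
  qed
  moreover have "(\<lambda>k. L * norm (wk k - w)) \<longlonglongrightarrow> L * norm (w - w)"
    by (intro tendsto_intros wl)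
  ultimately have "D \<longlonglongrightarrow> 0" using Lim_null_comparison by force
  hence "(\<lambda>k. D k + F (t k)) \<longlonglongrightarrow> 0 + dir_deriv2 G xs d w" by (intro tendsto_intros FT)
  then show ?thesis unfolding D_def a_def v_def by simp
qed

theorem proposition3p2:
  fixes G :: "real^'n \<Rightarrow> real^'m" and K :: "(real^'m) set" and xs :: "real^'n"
  assumes "closed K"
    and "loc_lipschitz G"
    and "sodd_at G xs"
    and "G xs \<in> K"
    and "MSCQ G K xs"
  shows "\<forall>d. outer_tangent2 {x. G x \<in> K} xs d =
           {w. dir_deriv2 G xs d w \<in> outer_tangent2 K (G xs) (dir_deriv G xs d)}"
proof
  fix d
  define v where "v = dir_deriv G xs d"
  define \<Psi> where "\<Psi> = {x. G x \<in> K}"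
  show "outer_tangent2 {x. G x \<in> K} xs d =
           {w. dir_deriv2 G xs d w \<in> outer_tangent2 K (G xs) (dir_deriv G xs d)}"
  proof (intro set_eqI iffI; simp)
    fix w assume "w \<in> outer_tangent2 {x. G x \<in> K} xs d"
    then obtain t wk where tpos: "\<forall>k. t k > 0" and t0: "t \<longlonglongrightarrow> 0" and wl: "wk \<longlonglongrightarrow> w"
      and mem: "\<forall>k. G (xs + t k *\<^sub>R d + ((1/2) * (t k)\<^sup>2) *\<^sub>R wk k) \<in> K"
      unfolding outer_tangent2_def by auto
    define u where "u = (\<lambda>k. (G (xs + t k *\<^sub>R d + ((1/2) * (t k)\<^sup>2) *\<^sub>R wk k) - G xs - t k *\<^sub>R v)
            /\<^sub>R ((1/2) * (t k)\<^sup>2))"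
    have ul: "u \<longlonglongrightarrow> dir_deriv2 G xs d w" unfolding u_def v_def
      by (rule key_limit[OF assms(2,3) tpos t0 wl])
    have "G xs + t k *\<^sub>R v + ((1/2) * (t k)\<^sup>2) *\<^sub>R u k \<in> K" for k
    proof -
      have "(1/2) * (t k)\<^sup>2 \<noteq> 0" using tpos[rule_format, of k] by simp
      hence "G xs + t k *\<^sub>R v + ((1/2) * (t k)\<^sup>2) *\<^sub>R u k = G (xs + t k *\<^sub>R d + ((1/2) * (t k)\<^sup>2) *\<^sub>R wk k)"
        unfolding u_def by simp
      then show ?thesis using mem by simp
    qed
    then show "dir_deriv2 G xs d w \<in> outer_tangent2 K (G xs) (dir_deriv G xs d)"
      unfolding outer_tangent2_def v_def[symmetric] using tpos t0 ul by blast
  next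
    fix w assume "dir_deriv2 G xs d w \<in> outer_tangent2 K (G xs) (dir_deriv G xs d)"
    then obtain t uk where tpos: "\<forall>k. t k > 0" and t0: "t \<longlonglongrightarrow> 0" and ul: "uk \<longlonglongrightarrow> dir_deriv2 G xs d w"
      and mem: "\<forall>k. G xs + t k *\<^sub>R v + ((1/2) * (t k)\<^sup>2) *\<^sub>R uk k \<in> K"
      unfolding outer_tangent2_def v_def by auto
    obtain U \<kappa> where U: "open U" "xs \<in> U" "\<kappa> > 0"
      and ms: "\<forall>x\<in>U. infdist x \<Psi> \<le> \<kappa> * infdist (G x) K"
      using assms(5) unfolding MSCQ_def \<Psi>_def by blast
    define y where "y = (\<lambda>k. xs + t k *\<^sub>R d + ((1/2) * (t k)\<^sup>2) *\<^sub>R w)"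
    define q where "q = (\<lambda>k. (G (y k) - G xs - t k *\<^sub>R v) /\<^sub>R ((1/2) * (t k)\<^sup>2))"
    have ql: "q \<longlonglongrightarrow> dir_deriv2 G xs d w" unfolding q_def y_def v_def
      by (rule key_limit[OF assms(2,3) tpos t0 tendsto_const])
    have xsP: "xs \<in> \<Psi>" using assms(4) unfolding \<Psi>_def by simp
    have "\<exists>z. z \<in> \<Psi> \<and> dist (y k) z < infdist (y k) \<Psi> + (t k)^3" for k
      using infdist_approx[OF xsP, of "(t k)^3" "y k"] tpos by auto
    then obtain z where zP: "\<And>k. z k \<in> \<Psi>" and zd: "\<And>k. dist (y k) (z k) < infdist (y k) \<Psi> + (t k)^3"
      by metis
    define wk where "wk = (\<lambda>k. (z k - xs - t k *\<^sub>R d) /\<^sub>R ((1/2) * (t k)\<^sup>2))"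
    have memz: "G (xs + t k *\<^sub>R d + ((1/2) * (t k)\<^sup>2) *\<^sub>R wk k) \<in> K" for k
    proof -
      have "(1/2) * (t k)\<^sup>2 \<noteq> 0" using tpos[rule_format, of k] by simp
      hence "xs + t k *\<^sub>R d + ((1/2) * (t k)\<^sup>2) *\<^sub>R wk k = z k" unfolding wk_def by simp
      then show ?thesis using zP[of k] unfolding \<Psi>_def by simp
    qed
    have "y \<longlonglongrightarrow> xs + 0 *\<^sub>R d + ((1/2) * 0\<^sup>2) *\<^sub>R w" unfolding y_def
      by (intro tendsto_intros t0)
    hence yl: "y \<longlonglongrightarrow> xs" by simp
    have evU: "eventually (\<lambda>k. y k \<in> U) sequentially"
      using topological_tendstoD[OF yl U(1,2)] .
    have "eventually (\<lambda>k. norm (wk k - w) \<le> \<kappa> * norm (q k - uk k) + 2 * t k) sequentially"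
      using evU
    proof (rule eventually_mono)
      fix k assume yU: "y k \<in> U"
      have tk: "t k > 0" using tpos by simp
      define s where "s = (1/2) * (t k)\<^sup>2"
      have sp: "s > 0" using tk unfolding s_def by simp
      have e1: "wk k - w = (z k - y k) /\<^sub>R s"
        unfolding wk_def y_def s_def using sp unfolding s_def by (simp add: algebra_simps)
      have e2: "G (y k) - (G xs + t k *\<^sub>R v + s *\<^sub>R uk k) = s *\<^sub>R (q k - uk k)"
        unfolding q_def s_def using sp unfolding s_def by (simp add: algebra_simps)
      have "infdist (G (y k)) K \<le> dist (G (y k)) (G xs + t k *\<^sub>R v + s *\<^sub>R uk k)"
        using infdist_le mem unfolding s_def by blast
      also have "\<dots> = s * norm (q k - uk k)" using e2 sp by (simp add: dist_norm)
      finally have i1: "infdist (G (y k)) K \<le> s * norm (q k - uk k)" .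
      have "norm (z k - y k) < \<kappa> * (s * norm (q k - uk k)) + (t k)^3"
        using zd[of k] ms yU i1 U(3) mult_left_mono[OF i1, of \<kappa>]
        by (smt (verit) dist_commute dist_norm)
      hence "norm (z k - y k) / s < (\<kappa> * (s * norm (q k - uk k)) + (t k)^3) / s"
        using sp by (simp add: divide_strict_right_mono)
      also have "(\<kappa> * (s * norm (q k - uk k)) + (t k)^3) / s = \<kappa> * norm (q k - uk k) + 2 * t k"
        using sp tk unfolding s_def by (simp add: field_simps power2_eq_square power3_eq_cube)
      finally show "norm (wk k - w) \<le> \<kappa> * norm (q k - uk k) + 2 * t k"
        unfolding e1 norm_scaleR_inv_pos[OF sp] by linarith
    qed
    moreover have "(\<lambda>k. \<kappa> * norm (q k - uk k) + 2 * t k) \<longlonglongrightarrow>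
        \<kappa> * norm (dir_deriv2 G xs d w - dir_deriv2 G xs d w) + 2 * 0"
      by (intro tendsto_intros ql ul t0)
    ultimately have "(\<lambda>k. wk k - w) \<longlonglongrightarrow> 0" using Lim_null_comparison by force
    hence wl: "wk \<longlonglongrightarrow> w" using LIM_zero_cancel by blast
    show "w \<in> outer_tangent2 {x. G x \<in> K} xs d"
      unfolding outer_tangent2_def using tpos t0 wl memz by blast
  qed
qed

end
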